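(* Let $\alpha_1,\ldots,\alpha_n\in\mathbb{R}^n$ be linearly independent unit vectors, let $Q=\{y\in\mathbb{R}^n:(y,\alpha_i)\geqslant0 \text{ for all } i\}$ with walls $B_i=\{y\in Q:(y,\alpha_i)=0\}$, and let $d>0$ and the unit vector $\mathbf{e}\in\mathbb{R}^n$ be determined by $(\mathbf{e},\alpha_i)=d$ for all $i=1,\ldots,n$ (equivalently, $d$ is the distance from the origin to the affine hyperplane through the points $\alpha_1,\ldots,\alpha_n$ and $\mathbf{e}$ its unit normal pointing away from the origin). Consider a billiard trajectory in $Q$ with unit speed that has undergone $N$ reflections at the walls, and let $\mathbf{v}_0,\mathbf{v}_1,\ldots,\mathbf{v}_N$ (points on the unit sphere) be its successive velocities. Then the length $L$ of the polygonal line through $\mathbf{v}_0,\ldots,\mathbf{v}_N$ satisfies $$L=\sum_{k=0}^{N-1}\|\mathbf{v}_{k+1}-\mathbf{v}_k\|\leqslant\frac{2}{d}.$$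
   Context: A billiard trajectory in $Q$: a point particle moves with uniform motion in the interior of $Q$ and undergoes specular reflections at the walls $B_i$, i.e. upon hitting $B_i$ its velocity $v$ is replaced by $v-2(v,\alpha_i)\alpha_i$; motion is not defined after reaching a corner $B_i\cap B_j$, $i\ne j$. *)

theory Defs
  imports "HOL-Analysis.Analysis"
begin

definition cone_Q :: "('n \<Rightarrow> real^'n) \<Rightarrow> (real^'n) set" where
  "cone_Q \<alpha> = {y. \<forall>i. y \<bullet> \<alpha> i \<ge> 0}"

definition wall :: "('n \<Rightarrow> real^'n) \<Rightarrow> 'n \<Rightarrow> (real^'n) set" where
  "wall \<alpha> i = {y \<in> cone_Q \<alpha>. y \<bullet> \<alpha> i = 0}"

text \<open>A unit-speed billiard trajectory in Q with N reflections: x 0 is the starting point,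
  x (k+1) is the point of the (k+1)-th reflection, which happens at wall w k and is not a
  corner; between consecutive points the particle moves uniformly with velocity v k through
  the interior of Q; at each reflection the velocity is reflected specularly.\<close>
definition billiard_traj ::
  "('n \<Rightarrow> real^'n) \<Rightarrow> nat \<Rightarrow> (nat \<Rightarrow> real^'n) \<Rightarrow> (nat \<Rightarrow> real^'n) \<Rightarrow> (nat \<Rightarrow> 'n) \<Rightarrow> bool" where
  "billiard_traj \<alpha> N x v w \<longleftrightarrow>
     norm (v 0) = 1 \<and> x 0 \<in> cone_Q \<alpha> \<and>
     (\<forall>k<N. \<exists>s>0. x (Suc k) = x k + s *\<^sub>R v k \<and>
              (\<forall>t. 0 < t \<and> t < s \<longrightarrow> (\<forall>j. (x k + t *\<^sub>R v k) \<bullet> \<alpha> j > 0))) \<and>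
     (\<forall>k<N. x (Suc k) \<in> wall \<alpha> (w k) \<and>
            (\<forall>j. j \<noteq> w k \<longrightarrow> x (Suc k) \<notin> wall \<alpha> j) \<and>
            v (Suc k) = v k - (2 * (v k \<bullet> \<alpha> (w k))) *\<^sub>R \<alpha> (w k))"

end

theory Submission
  imports Defs
begin

theorem lemma1:
  fixes \<alpha> :: "'n::finite \<Rightarrow> real^'n" and e :: "real^'n" and d :: real
    and N :: nat and x v :: "nat \<Rightarrow> real^'n" and w :: "nat \<Rightarrow> 'n"
  assumes "inj \<alpha>" and "independent (range \<alpha>)"
    and "\<forall>i. norm (\<alpha> i) = 1"
    and "d > 0" and "norm e = 1" and "\<forall>i. e \<bullet> \<alpha> i = d"
    and "billiard_traj \<alpha> N x v w"
  shows "(\<Sum>k<N. norm (v (Suc k) - v k)) \<le> 2 / d"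
proof -
  note B = assms(7)[unfolded billiard_traj_def]
  have aa: "\<alpha> i \<bullet> \<alpha> i = 1" for i
    using assms(3) by (metis norm_eq_1)
  have refl: "v (Suc k) = v k - (2 * (v k \<bullet> \<alpha> (w k))) *\<^sub>R \<alpha> (w k)" if "k < N" for k
    using B that by blast
  have nv: "norm (v k) = 1" if "k \<le> N" for k
    using that
  proof (induction k)
    case 0 then show ?case using B by blast
  next
    case (Suc k)
    then have h: "norm (v k) = 1" and r: "v (Suc k) = v k - (2 * (v k \<bullet> \<alpha> (w k))) *\<^sub>R \<alpha> (w k)"
      using refl by auto
    have "v (Suc k) \<bullet> v (Suc k) = v k \<bullet> v k"
      unfolding r using aa[of "w k"]
      by (simp add: inner_diff_left inner_diff_right inner_commute algebra_simps)
    then show ?case using h by (metis norm_eq_1)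
  qed
  have neg: "v k \<bullet> \<alpha> (w k) \<le> 0" if kN: "k < N" for k
  proof (rule ccontr)
    assume c: "\<not> ?thesis"
    from B have B3: "\<forall>k<N. \<exists>s>0. x (Suc k) = x k + s *\<^sub>R v k \<and>
              (\<forall>t. 0 < t \<and> t < s \<longrightarrow> (\<forall>j. (x k + t *\<^sub>R v k) \<bullet> \<alpha> j > 0))"
      by (elim conjE)
    from B have B4: "\<forall>k<N. x (Suc k) \<in> wall \<alpha> (w k) \<and>
            (\<forall>j. j \<noteq> w k \<longrightarrow> x (Suc k) \<notin> wall \<alpha> j) \<and>
            v (Suc k) = v k - (2 * (v k \<bullet> \<alpha> (w k))) *\<^sub>R \<alpha> (w k)"
      by (elim conjE)
    from B3[rule_format, OF kN] obtain s where s: "s > 0" "x (Suc k) = x k + s *\<^sub>R v k"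
      "\<forall>t. 0 < t \<and> t < s \<longrightarrow> (\<forall>j. (x k + t *\<^sub>R v k) \<bullet> \<alpha> j > 0)"
      by (elim exE conjE)
    from B4[rule_format, OF kN] have "x (Suc k) \<in> wall \<alpha> (w k)" by (elim conjE)
    then have z: "x (Suc k) \<bullet> \<alpha> (w k) = 0" by (simp add: wall_def)
    have p: "(x k + (s/2) *\<^sub>R v k) \<bullet> \<alpha> (w k) > 0" using s(3)[rule_format, of "s/2" "w k"] s(1) by simp
    have q: "x k \<bullet> \<alpha> (w k) + s * (v k \<bullet> \<alpha> (w k)) = 0"
      using z s(2) by (simp add: inner_add_left)
    have "0 < s * (v k \<bullet> \<alpha> (w k))" using c s(1) by simp
    then show False using p q by (simp add: inner_add_left)
  qed
  have step: "norm (v (Suc k) - v k) = (e \<bullet> v (Suc k) - e \<bullet> v k) / d" if "k < N" for k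
  proof -
    have d: "v (Suc k) - v k = (- 2 * (v k \<bullet> \<alpha> (w k))) *\<^sub>R \<alpha> (w k)"
      using refl[OF that] by simp
    have "norm (v (Suc k) - v k) = - 2 * (v k \<bullet> \<alpha> (w k))"
      unfolding d using neg[OF that] assms(3) by simp
    moreover have "e \<bullet> v (Suc k) - e \<bullet> v k = (- 2 * (v k \<bullet> \<alpha> (w k))) * d"
      using d assms(6) by (metis inner_diff_right inner_scaleR_right)
    ultimately show ?thesis using assms(4) by simp
  qed
  have "(\<Sum>k<N. norm (v (Suc k) - v k)) = (\<Sum>k<N. (e \<bullet> v (Suc k) - e \<bullet> v k) / d)"
    using step by simp
  also have "\<dots> = (e \<bullet> v N - e \<bullet> v 0) / d"
    by (simp add: sum_divide_distrib[symmetric] sum_lessThan_telescope[of "\<lambda>k. e \<bullet> v k"])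
  also have "\<dots> \<le> 2 / d"
  proof -
    have "\<bar>e \<bullet> v N\<bar> \<le> 1" using Cauchy_Schwarz_ineq2[of e "v N"] nv[of N] assms(5) by simp
    moreover have "\<bar>e \<bullet> v 0\<bar> \<le> 1" using Cauchy_Schwarz_ineq2[of e "v 0"] nv[of 0] assms(5) by simp
    ultimately show ?thesis using assms(4) by (simp add: divide_right_mono)
  qed
  finally show ?thesis .
qed

end
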